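(* Let $S\subset\mathbb N$, $r\ge2$ and $d\ge1$. If $E$ is a Bohr$_0$ set of dimension $d$ and $S$ is $2^dr$-large, then $S\cap E$ is $r$-large.
   Context: $\|t\|$ is the distance to the nearest integer. $E\subset\mathbb N$ is a Bohr$_0$ set if it contains a set $\{n\in\mathbb N:\|n\alpha_1\|<\varepsilon,\dots,\|n\alpha_k\|<\varepsilon\}$ for some $k\in\mathbb N$, $\alpha_1,\dots,\alpha_k\in\mathbb T$, $\varepsilon>0$; the least such $k$ is its dimension. For $m\ge2$, $R\subset\mathbb N$ is $m$-large if every coloring of $\mathbb N$ with $m$ colors contains arbitrarily long monochromatic arithmetic progressions with common difference in $R$. *)

theory Defs
  imports Complex_Main
begin

text \<open>Natural numbers are the positive integers; distance to nearest integer.\<close>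
definition dnint :: "real \<Rightarrow> real" where
  "dnint t = \<bar>t - of_int (round t)\<bar>"

definition bohr_nbhd :: "nat \<Rightarrow> (nat \<Rightarrow> real) \<Rightarrow> real \<Rightarrow> nat set" where
  "bohr_nbhd k alpha eps = {n. n \<ge> 1 \<and> (\<forall>i<k. dnint (real n * alpha i) < eps)}"

definition contains_bohr :: "nat set \<Rightarrow> nat \<Rightarrow> bool" where
  "contains_bohr E k \<longleftrightarrow> (\<exists>alpha eps. eps > 0 \<and> bohr_nbhd k alpha eps \<subseteq> E)"

definition bohr0_set :: "nat set \<Rightarrow> bool" where
  "bohr0_set E \<longleftrightarrow> (\<exists>k\<ge>1. contains_bohr E k)"

definition bohr0_dim :: "nat set \<Rightarrow> nat \<Rightarrow> bool" where
  "bohr0_dim E d \<longleftrightarrow> bohr0_set E \<and> d = (LEAST k. k \<ge> 1 \<and> contains_bohr E k)"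

definition large :: "nat \<Rightarrow> nat set \<Rightarrow> bool" where
  "large m R \<longleftrightarrow> (\<forall>c :: nat \<Rightarrow> nat. (\<forall>n\<ge>1. c n < m) \<longrightarrow>
     (\<forall>L. \<exists>a\<ge>1. \<exists>s\<in>R. \<forall>j<L. c (a + j * s) = c a))"

end

theory Submission
  imports Defs
begin

lemma code_bound:
  fixes f :: "nat \<Rightarrow> nat"
  shows "(\<forall>i<d. f i < 2) \<Longrightarrow> (\<Sum>i<d. f i * 2^i) < 2^d"
proof (induction d)
  case 0 then show ?case by simp
next
  case (Suc d)
  then have a: "(\<Sum>i<d. f i * 2^i) < 2^d" and "f d \<le> 1" by auto
  then have "f d * 2^d \<le> 1 * 2^d" by (intro mult_right_mono) auto
  then have "f d * 2^d \<le> 2^d" by simp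
  with a have "(\<Sum>i<d. f i * 2^i) + f d * 2^d < 2^d + 2^d" by linarith
  then show ?case by simp
qed

lemma code_inj:
  fixes f g :: "nat \<Rightarrow> nat"
  shows "(\<forall>i<d. f i < 2) \<Longrightarrow> (\<forall>i<d. g i < 2) \<Longrightarrow>
     (\<Sum>i<d. f i * 2^i) = (\<Sum>i<d. g i * 2^i) \<Longrightarrow> i < d \<Longrightarrow> f i = g i"
proof (induction d arbitrary: i)
  case 0 then show ?case by simp
next
  case (Suc d)
  have bf: "(\<Sum>i<d. f i * 2^i) < 2^d" using code_bound[of d f] Suc.prems by auto
  have bg: "(\<Sum>i<d. g i * 2^i) < 2^d" using code_bound[of d g] Suc.prems by auto
  have e: "(\<Sum>i<d. f i * 2^i) + f d * 2^d = (\<Sum>i<d. g i * 2^i) + g d * 2^d"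
    using Suc.prems(3) by simp
  have "((\<Sum>i<d. f i * 2^i) + f d * 2^d) div 2^d = f d"
    using bf by (subst div_mult_self1) (auto simp del: sum.lessThan_Suc)
  moreover have "((\<Sum>i<d. g i * 2^i) + g d * 2^d) div 2^d = g d"
    using bg by (subst div_mult_self1) (auto simp del: sum.lessThan_Suc)
  ultimately have fd: "f d = g d" using e by simp
  with e have s: "(\<Sum>i<d. f i * 2^i) = (\<Sum>i<d. g i * 2^i)" by simp
  have A: "\<forall>i<d. f i < 2" "\<forall>i<d. g i < 2" using Suc.prems(1,2) by auto
  show ?case
  proof (cases "i = d")
    case True with fd show ?thesis by simp
  next
    case False with Suc.prems(4) have "i < d" by simp
    then show ?thesis using Suc.IH[OF A s] by simp
  qed
qed

lemma prog_close:
  fixes x t :: real and N :: nat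
  assumes h: "\<forall>j\<le>N. (frac (x + real j * t) < 1/2) = (frac x < 1/2)" and N: "N \<ge> 1"
  shows "\<exists>k::int. real N * \<bar>t - of_int k\<bar> < 1/2"
proof -
  define u where "u j = frac (x + real j * t)" for j :: nat
  have hu: "\<forall>j\<le>N. (u j < 1/2) = (u 0 < 1/2)" using h by (simp add: u_def)
  have close: "\<bar>u j - u l\<bar> < 1/2" if "j \<le> N" "l \<le> N" for j l
  proof -
    have "0 \<le> u j" "u j < 1" "0 \<le> u l" "u l < 1" by (auto simp: u_def frac_lt_1)
    moreover have "(u j < 1/2) = (u 0 < 1/2)" using hu that(1) by blast
    moreover have "(u l < 1/2) = (u 0 < 1/2)" using hu that(2) by blast
    ultimately show ?thesis unfolding abs_less_iff by (cases "u 0 < 1/2") linarith+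
  qed
  have step: "u (Suc j) - u j = t - of_int (\<lfloor>x + real (Suc j) * t\<rfloor> - \<lfloor>x + real j * t\<rfloor>)" for j
  proof -
    have e: "x + real (Suc j) * t = (x + real j * t) + t" by (simp add: algebra_simps)
    show ?thesis unfolding u_def frac_def e of_int_diff by linarith
  qed
  define k where "k = \<lfloor>x + real (Suc 0) * t\<rfloor> - \<lfloor>x + real 0 * t\<rfloor>"
  have s0: "u (Suc 0) - u 0 = t - of_int k" using step[of 0] unfolding k_def .
  have c0: "\<bar>u (Suc 0) - u 0\<bar> < 1/2" using close[of "Suc 0" 0] N by simp
  have tk: "\<bar>t - of_int k\<bar> < 1/2" using s0 c0 by simp
  have lin: "j \<le> N \<Longrightarrow> u j = u 0 + real j * (t - of_int k)" for j
  proof (induction j)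
    case 0 then show ?case by simp
  next
    case (Suc j)
    define kj where "kj = \<lfloor>x + real (Suc j) * t\<rfloor> - \<lfloor>x + real j * t\<rfloor>"
    have sj: "u (Suc j) - u j = t - of_int kj" using step[of j] unfolding kj_def .
    have cj: "\<bar>u (Suc j) - u j\<bar> < 1/2" using close[of "Suc j" j] Suc.prems by simp
    have "\<bar>t - of_int kj\<bar> < 1/2" using sj cj by simp
    with tk have "\<bar>of_int kj - of_int k\<bar> < (1::real)" by linarith
    then have "\<bar>kj - k\<bar> < 1" by linarith
    then have "kj = k" by linarith
    have ih: "u j = u 0 + real j * (t - of_int k)" using Suc.IH Suc.prems by simp
    have "u (Suc j) = u j + (t - of_int k)" using sj \<open>kj = k\<close> by simp
    with ih show ?case by (simp add: ring_distribs)
  qed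
  have "\<bar>u N - u 0\<bar> < 1/2" using close[of N 0] by simp
  then have "\<bar>real N * (t - of_int k)\<bar> < 1/2" using lin[of N] by simp
  then show ?thesis by (auto simp: abs_mult)
qed

lemma dnint_le: "dnint t \<le> \<bar>t - of_int k\<bar>"
  unfolding dnint_def by (rule round_diff_minimal)

theorem mainTheorem18:
  fixes S E :: "nat set" and r d :: nat
  assumes "0 \<notin> S" and "0 \<notin> E"
    and "r \<ge> 2" and "d \<ge> 1"
    and "bohr0_dim E d"
    and "large (2 ^ d * r) S"
  shows "large r (S \<inter> E)"
proof -
  have "contains_bohr E d"
  proof -
    from assms(5) obtain k where "k \<ge> 1" "contains_bohr E k" "d = (LEAST k. k \<ge> 1 \<and> contains_bohr E k)"
      unfolding bohr0_dim_def bohr0_set_def by auto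
    then show ?thesis using LeastI[of "\<lambda>k. k \<ge> 1 \<and> contains_bohr E k" k] by auto
  qed
  then obtain alpha eps where eps: "eps > 0" and B: "bohr_nbhd d alpha eps \<subseteq> E"
    unfolding contains_bohr_def by auto
  show ?thesis unfolding large_def
  proof (intro allI impI)
    fix c :: "nat \<Rightarrow> nat" and L :: nat
    assume c: "\<forall>n\<ge>1. c n < r"
    define half where "half i n = (if frac (real n * alpha i) < 1/2 then 0 else 1::nat)" for i n
    define code where "code n = (\<Sum>i<d. half i n * 2^i)" for n
    define c' where "c' n = c n + r * code n" for n
    have h2: "\<forall>i<d. half i n < 2" for n by (simp add: half_def)
    have cb: "code n < 2^d" for n unfolding code_def by (rule code_bound[OF h2])
    have c'b: "\<forall>n\<ge>1. c' n < 2^d * r"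
    proof (intro allI impI)
      fix n :: nat assume "n \<ge> 1"
      then have "c n < r" using c by auto
      moreover have "code n + 1 \<le> 2^d" using cb[of n] by simp
      then have "r * (code n + 1) \<le> r * 2^d" by (rule mult_left_mono) simp
      ultimately show "c' n < 2^d * r" unfolding c'_def by (simp add: algebra_simps)
    qed
    define N where "N = nat \<lceil>1/eps\<rceil> + 1"
    have N1: "N \<ge> 1" by (simp add: N_def)
    have NE: "real N > 1/eps" unfolding N_def by linarith
    from assms(6) c'b obtain a s where a: "a \<ge> 1" and s: "s \<in> S"
      and mono: "\<forall>j<max L (N+1). c' (a + j * s) = c' a"
      unfolding large_def by blast
    have dec: "c (a + j*s) = c a \<and> code (a + j*s) = code a" if "j < max L (N+1)" for j
    proof -
      have e: "c (a + j*s) + r * code (a + j*s) = c a + r * code a"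
        using mono that by (simp add: c'_def)
      have x1: "c (a+j*s) < r" "c a < r" using c a by auto
      have "(c (a + j*s) + r * code (a + j*s)) mod r = c (a+j*s)" using x1 by simp
      moreover have "(c a + r * code a) mod r = c a" using x1 by simp
      ultimately have "c (a+j*s) = c a" using e by metis
      with e show ?thesis using assms(3) by simp
    qed
    have sE: "s \<in> E"
    proof -
      have "s \<ge> 1" using s assms(1) by (cases s) auto
      moreover have "dnint (real s * alpha i) < eps" if i: "i < d" for i
      proof -
        have "\<forall>j\<le>N. (frac (real a * alpha i + real j * (real s * alpha i)) < 1/2)
                 = (frac (real a * alpha i) < 1/2)"
        proof (intro allI impI)
          fix j assume "j \<le> N"
          then have "code (a + j*s) = code a" using dec[of j] by auto
          then have "half i (a + j*s) = half i a"
            using code_inj[of d "\<lambda>i. half i (a+j*s)" "\<lambda>i. half i a" i] h2 i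
            unfolding code_def by blast
          moreover have "real (a + j*s) * alpha i = real a * alpha i + real j * (real s * alpha i)"
            by (simp add: algebra_simps)
          ultimately show "(frac (real a * alpha i + real j * (real s * alpha i)) < 1/2)
                 = (frac (real a * alpha i) < 1/2)"
            unfolding half_def by (auto split: if_splits)
        qed
        then obtain k :: int where k: "real N * \<bar>real s * alpha i - of_int k\<bar> < 1/2"
          using prog_close N1 by blast
        have "eps * real N > 1" using NE eps by (simp add: field_simps)
        have "\<bar>real s * alpha i - of_int k\<bar> < eps"
        proof (rule ccontr)
          assume "\<not> \<bar>real s * alpha i - of_int k\<bar> < eps"
          then have "eps * real N \<le> \<bar>real s * alpha i - of_int k\<bar> * real N"
            by (intro mult_right_mono) auto
          moreover have "\<bar>real s * alpha i - of_int k\<bar> * real N < 1/2"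
            using k by (simp add: mult.commute)
          ultimately show False using \<open>eps * real N > 1\<close> by linarith
        qed
        then show ?thesis using dnint_le[of "real s * alpha i" k] by linarith
      qed
      ultimately show ?thesis using B unfolding bohr_nbhd_def by auto
    qed
    show "\<exists>a\<ge>1. \<exists>s\<in>S \<inter> E. \<forall>j<L. c (a + j * s) = c a"
    proof (intro exI conjI bexI allI impI)
      show "a \<ge> 1" by (rule a)
      show "s \<in> S \<inter> E" using s sE by simp
      fix j assume "j < L"
      then have "j < max L (N+1)" by simp
      then show "c (a + j * s) = c a" using dec by blast
    qed
  qed
qed

end
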